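(* Let $\lambda,\mu\in\mathbb R$ with $\mu>0$, $3\lambda+2\mu>0$, let $0<\theta_0<\pi/2$ and $$B_{\theta_0}=\{\beta=|\beta|e^{i\theta}\in\mathbb C:\ |\theta|\le\theta_0\ \text{or}\ |\theta-\pi|\le\theta_0\}.$$ With $A=\begin{pmatrix}\lambda+2\mu&0\\0&\mu\end{pmatrix}$, $B=\begin{pmatrix}0&\lambda+\mu\\\lambda+\mu&0\end{pmatrix}$, $C=\begin{pmatrix}\mu&0\\0&\lambda+2\mu\end{pmatrix}$, let $L_0(\xi,\beta)=A\xi^2+\beta B\xi+\beta^2C$. Then: (i) for all $\xi\in\mathbb R$ and $\beta\in B_{\theta_0}$ with $|\xi|+|\beta|\neq0$, $\det L_0(\xi,\beta)\neq0$; (ii) for every $\beta\in B_{\theta_0}$, $\beta\neq0$, the roots (counted with multiplicity) of the degree-four polynomial equation $\det L_0(z,\beta)=0$ in $z\in\mathbb C$ are equally distributed between the open upper and open lower half-planes (two in each). Consequently the differential operator $L(D_1,\beta)=AD_1^2+\beta BD_1+\beta^2C-\omega^2\rho I$ ($D_1=-i\partial_1$, $\omega,\rho>0$), of order $s=2$ acting on $\mathbb C^2$-valued functions with $r=2=Ns/2$ boundary conditions, satisfies the Agranovich–Vishik ellipticity-with-parameter condition on the parameter set $B_{\theta_0}$.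
   Context: The Agranovich–Vishik ellipticity-with-parameter condition for a one-dimensional $N\times N$ system of order $s$ with principal symbol $L_0(\xi,q)$, parameter $q$ in a set $Q$, means: $\det L_0(\xi,q)\ne0$ for real $\xi$, $q\in Q$, $|\xi|+|q|\ne0$; for $q\in Q\setminus\{0\}$ the roots in $z$ of $\det L_0(z,q)=0$ are equally distributed between the upper and lower half-planes; and the number of boundary conditions is $Ns/2$. *)

theory Defs
  imports "HOL-Analysis.Analysis" "HOL-Computational_Algebra.Polynomial"
begin

definition matA :: "real \<Rightarrow> real \<Rightarrow> real^2^2" where
  "matA lam mu = (\<chi> i j. if i = 1 \<and> j = 1 then lam + 2*mu
                          else if i = 2 \<and> j = 2 then mu else 0)"

definition matB :: "real \<Rightarrow> real \<Rightarrow> real^2^2" where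
  "matB lam mu = (\<chi> i j. if i \<noteq> j then lam + mu else 0)"

definition matC :: "real \<Rightarrow> real \<Rightarrow> real^2^2" where
  "matC lam mu = (\<chi> i j. if i = 1 \<and> j = 1 then mu
                          else if i = 2 \<and> j = 2 then lam + 2*mu else 0)"

definition L0poly :: "real \<Rightarrow> real \<Rightarrow> complex \<Rightarrow> complex poly^2^2" where
  "L0poly lam mu \<beta> = (\<chi> i j. [: \<beta>^2 * of_real (matC lam mu $ i $ j),
                                 \<beta> * of_real (matB lam mu $ i $ j),
                                 of_real (matA lam mu $ i $ j) :])"

definition Bset :: "real \<Rightarrow> complex set" where
  "Bset \<theta>0 = {\<beta>. \<exists>\<theta>. \<beta> = complex_of_real (cmod \<beta>) * cis \<theta> \<and>
                        (\<bar>\<theta>\<bar> \<le> \<theta>0 \<or> \<bar>\<theta> - pi\<bar> \<le> \<theta>0)}"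

definition roots_upper :: "complex poly \<Rightarrow> nat" where
  "roots_upper p = (\<Sum>z\<in>{z. Im z > 0 \<and> poly p z = 0}. order z p)"

definition roots_lower :: "complex poly \<Rightarrow> nat" where
  "roots_lower p = (\<Sum>z\<in>{z. Im z < 0 \<and> poly p z = 0}. order z p)"

text \<open>Agranovich--Vishik ellipticity with parameter for a one-dimensional
  N x N system of order s with r boundary conditions, parameter set Q,
  given through \<open>detL0 q\<close> = the polynomial \<open>z \<mapsto> det L0(z,q)\<close>.\<close>
definition AV_elliptic ::
  "nat \<Rightarrow> nat \<Rightarrow> nat \<Rightarrow> complex set \<Rightarrow> (complex \<Rightarrow> complex poly) \<Rightarrow> bool" where
  "AV_elliptic N s r Q detL0 \<longleftrightarrow>
     (\<forall>\<xi>::real. \<forall>q\<in>Q. \<bar>\<xi>\<bar> + cmod q \<noteq> 0 \<longrightarrow> poly (detL0 q) (of_real \<xi>) \<noteq> 0) \<and>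
     (\<forall>q\<in>Q - {0}. roots_upper (detL0 q) = roots_lower (detL0 q)) \<and>
     2 * r = N * s"

end

theory Submission
  imports Defs
begin
lemma detL0:
  fixes lam mu :: real and b :: complex
  shows "det (L0poly lam mu b) = smult (of_real ((lam+2*mu)*mu)) ([:-(\<i>*b),1:]^2 * [:\<i>*b,1:]^2)"
proof -
  have *: "poly (det (L0poly lam mu b)) z = poly (smult (of_real ((lam+2*mu)*mu)) ([:-(\<i>*b),1:]^2 * [:\<i>*b,1:]^2)) z" for z
  proof -
  define a where "a = complex_of_real (lam+2*mu)"
  define m where "m = complex_of_real mu"
  have lm: "complex_of_real (lam+mu) = a - m" by (simp add: a_def m_def)
  have am: "complex_of_real ((lam+2*mu)*mu) = a*m" by (simp add: a_def m_def)
  have "poly (det (L0poly lam mu b)) z =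
     (b^2 * m + a*z^2) * (b^2*a + m*z^2) - (b*(a-m)*z)*(b*(a-m)*z)"
    by (simp add: det_2 L0poly_def matA_def matB_def matC_def a_def m_def algebra_simps power2_eq_square eval_nat_numeral)
  also have "\<dots> = poly (smult (of_real ((lam+2*mu)*mu)) ([:-(\<i>*b),1:]^2 * [:\<i>*b,1:]^2)) z"
    unfolding am by (simp add: algebra_simps power2_eq_square eval_nat_numeral)
  finally show ?thesis .
  qed
  then have "poly (det (L0poly lam mu b)) = poly (smult (of_real ((lam+2*mu)*mu)) ([:-(\<i>*b),1:]^2 * [:\<i>*b,1:]^2))" by (rule ext)
  then show ?thesis by (simp add: poly_eq_poly_eq_iff)
qed

definition PP :: "complex \<Rightarrow> complex \<Rightarrow> complex poly" where
  "PP c w = smult c ([:-w,1:]^2 * [:w,1:]^2)"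

lemma PP_poly: "poly (PP c w) z = c * (z - w)^2 * (z + w)^2"
  by (simp add: PP_def algebra_simps power2_eq_square)

lemma PP_root: "c \<noteq> 0 \<Longrightarrow> poly (PP c w) z = 0 \<longleftrightarrow> z = w \<or> z = -w"
  by (auto simp: PP_poly eq_neg_iff_add_eq_0)

lemma PP_nz: "c \<noteq> 0 \<Longrightarrow> PP c w \<noteq> 0"
  by (auto simp: PP_def)

lemma PP_deg: "c \<noteq> 0 \<Longrightarrow> degree (PP c w) = 4"
  by (simp add: PP_def degree_mult_eq degree_power_eq)

lemma PP_order1: "c \<noteq> 0 \<Longrightarrow> w \<noteq> 0 \<Longrightarrow> order w (PP c w) = 2"
proof -
  assume c: "c \<noteq> 0" and w: "w \<noteq> 0"
  have "order w ([:w,1:]^2) = 0" using w by (intro order_0I) simp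
  moreover have "[:-w,1:]^2 * [:w,1:]^2 \<noteq> 0" using PP_nz[OF c, of w] by (auto simp: PP_def)
  ultimately show ?thesis using c
    by (simp add: PP_def order_smult order_mult order_power_n_n)
qed

lemma PP_order2: "c \<noteq> 0 \<Longrightarrow> w \<noteq> 0 \<Longrightarrow> order (-w) (PP c w) = 2"
proof -
  assume c: "c \<noteq> 0" and w: "w \<noteq> 0"
  have "order (-w) ([:-w,1:]^2) = 0" using w by (intro order_0I) simp
  moreover have "order (-w) ([:-(-w),1:]^2) = 2" by (rule order_power_n_n)
  moreover have "[:-w,1:]^2 * [:w,1:]^2 \<noteq> 0" using PP_nz[OF c, of w] by (auto simp: PP_def)
  ultimately show ?thesis using c
    by (simp add: PP_def order_smult order_mult)
qed

lemma Bset_Re: "\<beta> \<in> Bset t0 \<Longrightarrow> 0 < t0 \<Longrightarrow> t0 < pi/2 \<Longrightarrow> \<beta> \<noteq> 0 \<Longrightarrow> Re \<beta> \<noteq> 0"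
proof -
  assume b: "\<beta> \<in> Bset t0" "0 < t0" "t0 < pi/2" "\<beta> \<noteq> 0"
  then obtain th where th: "\<beta> = complex_of_real (cmod \<beta>) * cis th" "\<bar>th\<bar> \<le> t0 \<or> \<bar>th - pi\<bar> \<le> t0"
    by (auto simp: Bset_def)
  have "Re \<beta> = cmod \<beta> * cos th" by (subst th(1)) simp
  moreover have "cos th \<noteq> 0"
  proof (cases "\<bar>th\<bar> \<le> t0")
    case True
    then have "cos th > 0" using b by (intro cos_gt_zero_pi) auto
    then show ?thesis by simp
  next
    case False
    then have "\<bar>th - pi\<bar> \<le> t0" using th by auto
    then have "cos (th - pi) > 0" using b by (intro cos_gt_zero_pi) auto
    then show ?thesis by (simp add: cos_diff)
  qed
  ultimately show ?thesis using b by simp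
qed

theorem lemma1:
  fixes lam mu \<theta>0 :: real
  assumes "mu > 0" and "3*lam + 2*mu > 0"
    and "0 < \<theta>0" and "\<theta>0 < pi/2"
  shows "(\<forall>\<xi>::real. \<forall>\<beta>\<in>Bset \<theta>0. \<bar>\<xi>\<bar> + cmod \<beta> \<noteq> 0 \<longrightarrow>
            poly (det (L0poly lam mu \<beta>)) (of_real \<xi>) \<noteq> 0)
       \<and> (\<forall>\<beta>\<in>Bset \<theta>0. \<beta> \<noteq> 0 \<longrightarrow>
            degree (det (L0poly lam mu \<beta>)) = 4 \<and>
            roots_upper (det (L0poly lam mu \<beta>)) = 2 \<and>
            roots_lower (det (L0poly lam mu \<beta>)) = 2)
       \<and> AV_elliptic 2 2 2 (Bset \<theta>0) (\<lambda>\<beta>. det (L0poly lam mu \<beta>))"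
proof -
  define c where "c = complex_of_real ((lam+2*mu)*mu)"
  have "(lam+2*mu)*mu > 0" using assms by simp
  then have "(lam+2*mu)*mu \<noteq> 0" by linarith
  then have c0: "c \<noteq> 0" unfolding c_def of_real_eq_0_iff by assumption
  have D: "det (L0poly lam mu b) = PP c (\<i>*b)" for b
    by (simp add: detL0 PP_def c_def)
  have P1: "\<forall>\<xi>::real. \<forall>\<beta>\<in>Bset \<theta>0. \<bar>\<xi>\<bar> + cmod \<beta> \<noteq> 0 \<longrightarrow>
            poly (det (L0poly lam mu \<beta>)) (of_real \<xi>) \<noteq> 0"
  proof (intro allI ballI impI)
    fix \<xi> :: real and \<beta> assume b: "\<beta> \<in> Bset \<theta>0" and ne: "\<bar>\<xi>\<bar> + cmod \<beta> \<noteq> 0"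
    show "poly (det (L0poly lam mu \<beta>)) (of_real \<xi>) \<noteq> 0"
    proof
      assume "poly (det (L0poly lam mu \<beta>)) (of_real \<xi>) = 0"
      then have "of_real \<xi> = \<i>*\<beta> \<or> of_real \<xi> = -(\<i>*\<beta>)" using PP_root[OF c0] D by simp
      then have e: "Re \<beta> = 0 \<and> \<xi> = - Im \<beta> \<or> Re \<beta> = 0 \<and> \<xi> = Im \<beta>"
        by (auto simp: complex_eq_iff)
      then have "\<beta> = 0" using Bset_Re[OF b assms(3,4)] by blast
      with e have "\<xi> = 0" by auto
      with \<open>\<beta> = 0\<close> ne show False by simp
    qed
  qed
  have P2: "\<forall>\<beta>\<in>Bset \<theta>0. \<beta> \<noteq> 0 \<longrightarrow>
            degree (det (L0poly lam mu \<beta>)) = 4 \<and>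
            roots_upper (det (L0poly lam mu \<beta>)) = 2 \<and>
            roots_lower (det (L0poly lam mu \<beta>)) = 2"
  proof (intro ballI impI)
    fix \<beta> assume b: "\<beta> \<in> Bset \<theta>0" and nz: "\<beta> \<noteq> 0"
    define w where "w = \<i>*\<beta>"
    have w0: "w \<noteq> 0" using nz by (simp add: w_def)
    have R: "Re \<beta> \<noteq> 0" using Bset_Re[OF b assms(3,4) nz] .
    have Iw: "Im w = Re \<beta>" "Im (-w) = - Re \<beta>" by (auto simp: w_def)
    have roots: "{z. poly (PP c w) z = 0} = {w, -w}" using PP_root[OF c0] by auto
    have U: "{z. Im z > 0 \<and> poly (PP c w) z = 0} = (if Re \<beta> > 0 then {w} else {-w})"
      using PP_root[OF c0, of w] R Iw by (auto simp: w_def)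
    have L: "{z. Im z < 0 \<and> poly (PP c w) z = 0} = (if Re \<beta> > 0 then {-w} else {w})"
      using PP_root[OF c0, of w] R Iw by (auto simp: w_def)
    show "degree (det (L0poly lam mu \<beta>)) = 4 \<and>
            roots_upper (det (L0poly lam mu \<beta>)) = 2 \<and>
            roots_lower (det (L0poly lam mu \<beta>)) = 2"
      unfolding D w_def[symmetric] roots_upper_def roots_lower_def U L
      using PP_deg[OF c0] PP_order1[OF c0 w0] PP_order2[OF c0 w0] by simp
  qed
  show ?thesis using P1 P2 unfolding AV_elliptic_def by auto
qed
end
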